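(* For every integer $d\geq 2$ there exist $\epsilon=\epsilon(d)>0$ and $\eta=\eta(d)>0$ such that the following holds. Let $X$ be a distance-regular graph of diameter $d$ on $n$ vertices and degree $k$. If $k_t\geq (1-\epsilon)n$ for some $t\in\{1,\dots,d\}$, then the zero-weight spectral radius $\xi$ of $X$ satisfies $\xi\leq k(1-\eta)$.
   Context: A connected graph $X$ of diameter $d$ is distance-regular if there are integers $a_i,b_i,c_i$ ($0\le i\le d$) such that for all vertices $v,w$ with $\mathrm{dist}(v,w)=i$, the vertex $w$ has exactly $c_i$ neighbours at distance $i-1$ from $v$, $a_i$ neighbours at distance $i$ from $v$, and $b_i$ neighbours at distance $i+1$ from $v$. Then $X$ is $k$-regular with $k=b_0$, $c_0=b_d=0$, $c_1=1$ and $a_i+b_i+c_i=k$. For $0\le i\le d$, $k_i$ denotes the number of vertices at distance exactly $i$ from a fixed vertex (independent of the vertex). If the eigenvalues of the adjacency matrix of a $k$-regular graph on $n$ vertices are $k=\xi_1\geq\xi_2\geq\dots\geq\xi_n$, the zero-weight spectral radius is $\xi=\max\{|\xi_i|:2\le i\le n\}$. *)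

theory Defs
  imports "Jordan_Normal_Form.Char_Poly"
begin

definition simple_graph :: "nat \<Rightarrow> (nat \<Rightarrow> nat \<Rightarrow> bool) \<Rightarrow> bool" where
  "simple_graph n E \<longleftrightarrow> (\<forall>u v. E u v \<longrightarrow> u < n \<and> v < n) \<and>
                         (\<forall>u v. E u v \<longrightarrow> E v u) \<and> (\<forall>u. \<not> E u u)"

definition has_walk :: "nat \<Rightarrow> (nat \<Rightarrow> nat \<Rightarrow> bool) \<Rightarrow> nat \<Rightarrow> nat \<Rightarrow> nat \<Rightarrow> bool" where
  "has_walk n E m v w \<longleftrightarrow> (\<exists>f. f 0 = v \<and> f m = w \<and> (\<forall>i\<le>m. f i < n) \<and>
                                   (\<forall>i<m. E (f i) (f (Suc i))))"

definition graph_connected :: "nat \<Rightarrow> (nat \<Rightarrow> nat \<Rightarrow> bool) \<Rightarrow> bool" where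
  "graph_connected n E \<longleftrightarrow> (\<forall>v<n. \<forall>w<n. \<exists>m. has_walk n E m v w)"

definition gdist :: "nat \<Rightarrow> (nat \<Rightarrow> nat \<Rightarrow> bool) \<Rightarrow> nat \<Rightarrow> nat \<Rightarrow> nat" where
  "gdist n E v w = (LEAST m. has_walk n E m v w)"

definition diameter :: "nat \<Rightarrow> (nat \<Rightarrow> nat \<Rightarrow> bool) \<Rightarrow> nat" where
  "diameter n E = Max {gdist n E v w | v w. v < n \<and> w < n}"

definition k_regular :: "nat \<Rightarrow> (nat \<Rightarrow> nat \<Rightarrow> bool) \<Rightarrow> nat \<Rightarrow> bool" where
  "k_regular n E k \<longleftrightarrow> (\<forall>v<n. card {u. u < n \<and> E v u} = k)"

definition distance_regular :: "nat \<Rightarrow> (nat \<Rightarrow> nat \<Rightarrow> bool) \<Rightarrow> bool" where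
  "distance_regular n E \<longleftrightarrow> simple_graph n E \<and> 0 < n \<and> graph_connected n E \<and>
     (\<exists>a b c :: nat \<Rightarrow> nat. \<forall>i \<le> diameter n E. \<forall>v<n. \<forall>w<n. gdist n E v w = i \<longrightarrow>
        card {u. u < n \<and> E w u \<and> Suc (gdist n E v u) = i} = c i \<and>
        card {u. u < n \<and> E w u \<and> gdist n E v u = i} = a i \<and>
        card {u. u < n \<and> E w u \<and> gdist n E v u = Suc i} = b i)"

definition k_dist :: "nat \<Rightarrow> (nat \<Rightarrow> nat \<Rightarrow> bool) \<Rightarrow> nat \<Rightarrow> nat \<Rightarrow> nat" where
  "k_dist n E v i = card {w. w < n \<and> gdist n E v w = i}"

definition adj_matrix :: "nat \<Rightarrow> (nat \<Rightarrow> nat \<Rightarrow> bool) \<Rightarrow> real mat" where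
  "adj_matrix n E = mat n n (\<lambda>(i, j). if E i j then 1 else 0)"

definition eigenvalues_desc :: "real mat \<Rightarrow> real list" where
  "eigenvalues_desc A = (THE es. length es = dim_row A \<and> sorted_wrt (\<ge>) es \<and>
      char_poly A = prod_list (map (\<lambda>a. [:- a, 1:]) es))"

text \<open>Zero-weight spectral radius: max |xi_i| over 2 <= i <= n (1-based).\<close>
definition zero_weight_spectral_radius :: "real mat \<Rightarrow> real" where
  "zero_weight_spectral_radius A =
     Max ((\<lambda>i. \<bar>eigenvalues_desc A ! i\<bar>) ` {1..<dim_row A})"

end

theory Submission
  imports Defs
begin


lemma sum_split0: fixes n :: nat assumes "0 < n" shows "(\<Sum>m = 0..<n. f m) = f 0 + (\<Sum>m = 1..<n. f m)"
  using sum.atLeast_Suc_lessThan[OF assms, of f] by simp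

lemma block_char_poly:
  fixes A :: "real mat" and k :: real
  assumes A: "A \<in> carrier_mat n n" and n: "0 < n"
    and sym: "\<And>i j. i < n \<Longrightarrow> j < n \<Longrightarrow> A $$ (i, j) = A $$ (j, i)"
    and rs: "\<And>i. i < n \<Longrightarrow> (\<Sum>j = 0..<n. A $$ (i, j)) = k"
  shows "char_poly A = [:-k, 1:] * char_poly (mat (n-1) (n-1) (\<lambda>(i,j). A $$ (Suc i, Suc j) - A $$ (Suc i, 0)))"
proof -
  define m where "m = n - 1"
  define A3 where "A3 = mat m m (\<lambda>(i,j). A $$ (Suc i, Suc j) - A $$ (Suc i, 0))"
  define W :: "real mat" where "W = mat n n (\<lambda>(i,j). if j = 0 then 1 else (if i = j then 1 else 0) - (if i = 0 then 1 else 0))"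
  define W' :: "real mat" where "W' = mat n n (\<lambda>(i,j). if i = 0 then 1 / real n else (if i = j then 1 else 0) - 1 / real n)"
  define B :: "real mat" where "B = mat n n (\<lambda>(i,j). if i = 0 \<and> j = 0 then k else if i = 0 \<or> j = 0 then 0 else A $$ (i, j) - A $$ (i, 0))"
  have cs: "(\<Sum>i = 0..<n. A $$ (i, j)) = k" if "j < n" for j
    using rs[OF that] sym that by (metis (no_types, lifting) atLeastLessThan_iff sum.cong)
  have nn: "n = Suc m" using n m_def by simp
  have WW': "W * W' = 1\<^sub>m n"
  proof (rule eq_matI)
    fix i j assume i: "i < dim_row (1\<^sub>m n)" and j: "j < dim_col (1\<^sub>m n)"
    hence i: "i < n" and j: "j < n" by auto
    have "(W * W') $$ (i, j) = (\<Sum>l = 0..<n. W $$ (i, l) * W' $$ (l, j))"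
      using i j by (simp add: W_def W'_def scalar_prod_def)
    also have "\<dots> = 1 / real n + (\<Sum>l = 1..<n. ((if i = l then 1 else 0) - (if i = 0 then 1 else 0)) * ((if l = j then 1 else 0) - 1 / real n))"
      using i j n by (simp add: sum_split0 W_def W'_def)
    also have "\<dots> = (if i = j then 1 else 0)"
    proof (cases "i = 0")
      case True
      have "(\<Sum>l = 1..<n. ((if i = l then 1 else 0) - (if i = 0 then 1 else 0)) * ((if l = j then 1 else 0) - 1 / real n))
          = (\<Sum>l = 1..<n. 1 / real n - (if l = j then 1 else 0))"
        using True by (intro sum.cong) auto
      also have "\<dots> = real (n - 1) / real n - (if j \<ge> 1 then 1 else 0)"
        using j by (simp add: sum_subtractf)
      finally show ?thesis using True n j by (auto simp: field_simps of_nat_diff)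
    next
      case False
      have "(\<Sum>l = 1..<n. ((if i = l then 1 else 0) - (if i = 0 then 1 else 0)) * ((if l = j then 1 else 0) - 1 / real n))
          = (\<Sum>l = 1..<n. (if i = l then (if l = j then 1 else 0) - 1 / real n else 0))"
        using False by (intro sum.cong) auto
      also have "\<dots> = (if i = j then 1 else 0) - 1 / real n"
        using False i by (simp add: sum.delta)
      finally show ?thesis by simp
    qed
    finally show "(W * W') $$ (i, j) = 1\<^sub>m n $$ (i, j)" using i j by simp
  qed (auto simp: W_def W'_def)
  have Wc: "W \<in> carrier_mat n n" and W'c: "W' \<in> carrier_mat n n" and Bc: "B \<in> carrier_mat n n"
    by (auto simp: W_def W'_def B_def)
  have W'W: "W' * W = 1\<^sub>m n" by (rule mat_mult_left_right_inverse[OF Wc W'c WW'])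
  have AW: "A * W = W * B"
  proof (rule eq_matI)
    fix i j assume i: "i < dim_row (W * B)" and j: "j < dim_col (W * B)"
    hence i: "i < n" and j: "j < n" using Wc Bc by auto
    have l: "(A * W) $$ (i, j) = (\<Sum>l = 0..<n. A $$ (i, l) * W $$ (l, j))"
      using i j A by (simp add: W_def scalar_prod_def)
    have r: "(W * B) $$ (i, j) = (\<Sum>l = 0..<n. W $$ (i, l) * B $$ (l, j))"
      using i j A by (simp add: W_def B_def scalar_prod_def)
    show "(A * W) $$ (i, j) = (W * B) $$ (i, j)"
    proof (cases "j = 0")
      case True
      have "(\<Sum>l = 0..<n. A $$ (i, l) * W $$ (l, j)) = k" using True rs[OF i] by (intro trans[OF sum.cong rs[OF i]]) (auto simp: W_def)
      moreover have "(\<Sum>l = 0..<n. W $$ (i, l) * B $$ (l, j)) = k"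
        using True n i by (simp add: sum_split0 W_def B_def)
      ultimately show ?thesis using l r by simp
    next
      case False
      have "(\<Sum>l = 0..<n. A $$ (i, l) * W $$ (l, j)) = (\<Sum>l = 0..<n. (if l = j then A $$ (i, l) else 0) - (if l = 0 then A $$ (i, l) else 0))"
        using False j by (intro sum.cong) (auto simp: W_def)
      also have "\<dots> = A $$ (i, j) - A $$ (i, 0)" using j n by (simp add: sum_subtractf sum.delta)
      finally have L: "(\<Sum>l = 0..<n. A $$ (i, l) * W $$ (l, j)) = A $$ (i, j) - A $$ (i, 0)" .
      have "(\<Sum>l = 0..<n. W $$ (i, l) * B $$ (l, j)) = (\<Sum>l = 1..<n. ((if i = l then 1 else 0) - (if i = 0 then 1 else 0)) * (A $$ (l, j) - A $$ (l, 0)))"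
        using False n i j by (simp add: sum_split0 W_def B_def)
      also have "\<dots> = A $$ (i, j) - A $$ (i, 0)"
      proof (cases "i = 0")
        case True
        have "(\<Sum>l = 1..<n. ((if i = l then 1 else 0) - (if i = 0 then 1 else 0)) * (A $$ (l, j) - A $$ (l, 0)))
            = - ((\<Sum>l = 1..<n. A $$ (l, j)) - (\<Sum>l = 1..<n. A $$ (l, 0)))"
          using True by (simp add: sum_subtractf sum_negf)
        also have "(\<Sum>l = 1..<n. A $$ (l, j)) = k - A $$ (0, j)" using cs[OF j] n by (simp add: sum_split0)
        also have "(\<Sum>l = 1..<n. A $$ (l, 0)) = k - A $$ (0, 0)" using cs[of 0] n by (simp add: sum_split0)
        finally show ?thesis using True by simp
      next
        case False
        have "(\<Sum>l = 1..<n. ((if i = l then 1 else 0) - (if i = 0 then 1 else 0)) * (A $$ (l, j) - A $$ (l, 0)))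
            = (\<Sum>l = 1..<n. (if i = l then A $$ (l, j) - A $$ (l, 0) else 0))"
          using False by (intro sum.cong) auto
        also have "\<dots> = A $$ (i, j) - A $$ (i, 0)" using False i by (simp add: sum.delta)
        finally show ?thesis .
      qed
      finally show ?thesis using L l r by simp
    qed
  qed (use Wc Bc A in auto)
  have "A = A * (W * W')" using A by (simp add: WW')
  also have "\<dots> = (A * W) * W'" using A Wc W'c by (simp add: assoc_mult_mat)
  also have "\<dots> = W * B * W'" by (simp add: AW)
  finally have AB: "A = W * B * W'" .
  have "similar_mat A B" unfolding similar_mat_def similar_mat_wit_def
    using A Wc W'c Bc WW' W'W AB by (intro exI[of _ W] exI[of _ W']) (auto simp: Let_def)
  hence "char_poly A = char_poly B" by (rule char_poly_similar)
  also have "B = four_block_mat (mat 1 1 (\<lambda>_. k)) (0\<^sub>m 1 m) (0\<^sub>m m 1) A3"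
    by (rule eq_matI) (auto simp: B_def A3_def nn)
  also have "char_poly \<dots> = char_poly (mat 1 1 (\<lambda>_. k)) * char_poly A3"
    by (rule char_poly_four_block_zeros_col) (auto simp: A3_def)
  also have "char_poly (mat 1 1 (\<lambda>_. k)) = [:-k, 1:]"
    by (simp add: char_poly_defs det_def sign_def)
  finally show ?thesis unfolding A3_def m_def .
qed

lemma eig_real_bound:
  fixes A :: "real mat" and k \<mu> :: real and e :: complex
  assumes A: "A \<in> carrier_mat n n" and n: "0 < n"
    and sym: "\<And>i j. i < n \<Longrightarrow> j < n \<Longrightarrow> A $$ (i, j) = A $$ (j, i)"
    and rs: "\<And>i. i < n \<Longrightarrow> (\<Sum>j<n. A $$ (i, j)) = k"
    and QF: "\<And>y. (\<Sum>u<n. y u) = 0 \<Longrightarrow> \<bar>\<Sum>u<n. \<Sum>w<n. A $$ (u, w) * y u * y w\<bar> \<le> \<mu> * (\<Sum>u<n. (y u)^2)"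
    and root: "poly (char_poly (map_mat complex_of_real (mat (n-1) (n-1) (\<lambda>(i,j). A $$ (Suc i, Suc j) - A $$ (Suc i, 0))))) e = 0"
  shows "Im e = 0 \<and> \<bar>Re e\<bar> \<le> \<mu>"
proof -
  define m where "m = n - 1"
  have nn: "n = Suc m" using n m_def by simp
  define A3 where "A3 = map_mat complex_of_real (mat m m (\<lambda>(i,j). A $$ (Suc i, Suc j) - A $$ (Suc i, 0)))"
  have A3c: "A3 \<in> carrier_mat m m" by (simp add: A3_def)
  have "poly (char_poly A3) e = 0" using root by (simp add: A3_def m_def)
  hence "eigenvalue A3 e" using eigenvalue_root_char_poly[OF A3c] by simp
  then obtain z where ev: "eigenvector A3 z e" unfolding eigenvalue_def by blast
  hence zc: "z \<in> carrier_vec m" and z0: "z \<noteq> 0\<^sub>v m" and Az: "A3 *\<^sub>v z = e \<cdot>\<^sub>v z"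
    unfolding eigenvector_def using A3c by auto
  have dz: "dim_vec z = m" using zc by simp
  define Ac where "Ac u w = complex_of_real (A $$ (u, w))" for u w
  have evi: "(\<Sum>j<m. (Ac (Suc i) (Suc j) - Ac (Suc i) 0) * z $ j) = e * z $ i" if i: "i < m" for i
  proof -
    have "(A3 *\<^sub>v z) $ i = e * z $ i" using Az i dz by simp
    moreover have "(A3 *\<^sub>v z) $ i = (\<Sum>j<m. (Ac (Suc i) (Suc j) - Ac (Suc i) 0) * z $ j)"
      using i dz A3c by (simp add: A3_def Ac_def scalar_prod_def atLeast0LessThan)
    ultimately show ?thesis by simp
  qed
  define y where "y l = (if l = 0 then - (\<Sum>j<m. z $ j) else z $ (l - 1))" for l
  have ySuc: "y (Suc i) = z $ i" for i by (simp add: y_def)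
  have ysum: "(\<Sum>l<n. y l) = 0" unfolding nn sum.lessThan_Suc_shift by (simp add: y_def)
  have csum: "(\<Sum>l<n. Ac l w) = of_real k" if w: "w < n" for w
  proof -
    have "(\<Sum>l<n. Ac l w) = of_real (\<Sum>l<n. A $$ (l, w))" by (simp add: Ac_def)
    also have "(\<Sum>l<n. A $$ (l, w)) = (\<Sum>l<n. A $$ (w, l))" using sym w by (intro sum.cong) auto
    finally show ?thesis using rs[OF w] by simp
  qed
  have AyS: "(\<Sum>w<n. Ac (Suc i) w * y w) = e * y (Suc i)" if i: "i < m" for i
  proof -
    have "(\<Sum>w<n. Ac (Suc i) w * y w) = Ac (Suc i) 0 * y 0 + (\<Sum>j<m. Ac (Suc i) (Suc j) * z $ j)"
      unfolding nn sum.lessThan_Suc_shift by (simp add: y_def)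
    also have "\<dots> = (\<Sum>j<m. (Ac (Suc i) (Suc j) - Ac (Suc i) 0) * z $ j)"
      by (simp add: y_def sum_distrib_left algebra_simps sum_subtractf)
    finally show ?thesis using evi[OF i] by (simp add: y_def)
  qed
  have tot: "(\<Sum>l<n. \<Sum>w<n. Ac l w * y w) = 0"
  proof -
    have "(\<Sum>l<n. \<Sum>w<n. Ac l w * y w) = (\<Sum>w<n. (\<Sum>l<n. Ac l w) * y w)"
      by (subst sum.swap) (simp add: sum_distrib_right)
    also have "\<dots> = (\<Sum>w<n. of_real k * y w)" by (intro sum.cong) (auto simp: csum)
    also have "\<dots> = 0" using ysum by (simp add: sum_distrib_left[symmetric])
    finally show ?thesis .
  qed
  have Ay0: "(\<Sum>w<n. Ac 0 w * y w) = e * y 0"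
  proof -
    have "(\<Sum>l<n. \<Sum>w<n. Ac l w * y w) = (\<Sum>w<n. Ac 0 w * y w) + (\<Sum>i<m. \<Sum>w<n. Ac (Suc i) w * y w)"
      unfolding nn sum.lessThan_Suc_shift by simp
    also have "(\<Sum>i<m. \<Sum>w<n. Ac (Suc i) w * y w) = (\<Sum>i<m. e * z $ i)"
      using AyS by (intro sum.cong) (auto simp: ySuc)
    finally show ?thesis using tot by (simp add: y_def sum_distrib_left[symmetric] eq_neg_iff_add_eq_0)
  qed
  have Ay: "(\<Sum>w<n. Ac l w * y w) = e * y l" if l: "l < n" for l
  proof (cases l)
    case 0 thus ?thesis using Ay0 by simp
  next
    case (Suc i) thus ?thesis using AyS[of i] l nn by simp
  qed
  define p where "p u = Re (y u)" for u
  define q where "q u = Im (y u)" for u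
  define N where "N = (\<Sum>u<n. (p u)^2 + (q u)^2)"
  define S where "S = (\<Sum>u<n. \<Sum>w<n. Ac u w * cnj (y u) * y w)"
  have "S = (\<Sum>u<n. cnj (y u) * (\<Sum>w<n. Ac u w * y w))"
    unfolding S_def by (simp add: sum_distrib_left algebra_simps)
  also have "\<dots> = (\<Sum>u<n. e * (y u * cnj (y u)))" by (intro sum.cong) (auto simp: Ay)
  also have "\<dots> = e * of_real N"
    by (simp add: sum_distrib_left[symmetric] complex_norm_square[symmetric] N_def p_def q_def cmod_power2)
  finally have SN: "S = e * of_real N" .
  have ReS: "Re S = (\<Sum>u<n. \<Sum>w<n. A $$ (u, w) * p u * p w) + (\<Sum>u<n. \<Sum>w<n. A $$ (u, w) * q u * q w)"
    unfolding S_def by (simp add: Re_sum Ac_def p_def q_def sum.distrib[symmetric] algebra_simps)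
  have "Im S = (\<Sum>u<n. \<Sum>w<n. A $$ (u, w) * p u * q w) - (\<Sum>u<n. \<Sum>w<n. A $$ (u, w) * q u * p w)"
    unfolding S_def by (simp add: Im_sum Ac_def p_def q_def sum_subtractf[symmetric] algebra_simps)
  also have "(\<Sum>u<n. \<Sum>w<n. A $$ (u, w) * q u * p w) = (\<Sum>u<n. \<Sum>w<n. A $$ (u, w) * p u * q w)"
    by (subst sum.swap) (intro sum.cong refl, simp add: sym mult.commute mult.left_commute)
  finally have ImS: "Im S = 0" by simp
  have psum: "(\<Sum>u<n. p u) = 0" using arg_cong[OF ysum, of Re] by (simp add: Re_sum p_def)
  have qsum: "(\<Sum>u<n. q u) = 0" using arg_cong[OF ysum, of Im] by (simp add: Im_sum q_def)
  have "\<bar>Re S\<bar> \<le> \<mu> * (\<Sum>u<n. (p u)^2) + \<mu> * (\<Sum>u<n. (q u)^2)"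
    unfolding ReS using QF[OF psum] QF[OF qsum] by linarith
  hence ReSb: "\<bar>Re S\<bar> \<le> \<mu> * N" by (simp add: N_def sum.distrib algebra_simps)
  have Npos: "N > 0"
  proof -
    obtain j where j: "j < m" "z $ j \<noteq> 0" using z0 zc by (metis eq_vecI index_zero_vec(1) carrier_vecD index_zero_vec(2))
    have "y (Suc j) \<noteq> 0" using j by (simp add: y_def)
    hence "(p (Suc j))^2 + (q (Suc j))^2 > 0" by (simp add: p_def q_def complex_eq_iff sum_power2_gt_zero_iff)
    moreover have "Suc j \<in> {..<n}" using j nn by simp
    ultimately show ?thesis unfolding N_def
      by (intro sum_pos2[of _ "Suc j"]) (auto intro: add_nonneg_nonneg)
  qed
  have "Im e * N = 0" using ImS SN by simp
  hence im: "Im e = 0" using Npos by simp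
  have "Re e * N = Re S" using SN by simp
  hence "\<bar>Re e\<bar> * N = \<bar>Re S\<bar>" using Npos by (metis abs_mult abs_of_pos)
  hence "\<bar>Re e\<bar> * N \<le> \<mu> * N" using ReSb by simp
  hence "\<bar>Re e\<bar> \<le> \<mu>" using Npos by (meson mult_right_le_imp_le)
  thus ?thesis using im by simp
qed


lemma prod_lin_root: "poly (\<Prod>a\<leftarrow>xs. [:-a, 1:]) x = 0 \<longleftrightarrow> x \<in> set (xs :: 'a :: idom list)"
  by (induction xs) auto

lemma prod_lin_perm: "mset xs = mset ys \<Longrightarrow> (\<Prod>a\<leftarrow>xs. f a) = (\<Prod>a\<leftarrow>ys. (f a :: 'b :: comm_monoid_mult))"
proof -
  assume "mset xs = mset ys"
  hence "mset (map f xs) = mset (map f ys)" by simp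
  hence "prod_mset (mset (map f xs)) = prod_mset (mset (map f ys))" by simp
  thus ?thesis by (simp only: prod_mset_prod_list)
qed

lemma prod_lin_mset:
  "(\<Prod>a\<leftarrow>xs. [:-a, 1:]) = (\<Prod>a\<leftarrow>ys. [:-a, 1:]) \<Longrightarrow> mset xs = mset (ys :: 'a :: idom list)"
proof (induction xs arbitrary: ys)
  case Nil
  show ?case
  proof (cases ys)
    case (Cons y ys')
    have "y \<in> set ys" using Cons by simp
    hence "poly (\<Prod>a\<leftarrow>ys. [:-a, 1:]) y = 0" by (simp only: prod_lin_root)
    hence "poly (\<Prod>a\<leftarrow>[]. [:-a, 1:]) y = 0" by (simp only: Nil.prems)
    thus ?thesis by simp
  qed simp
next
  case (Cons a xs)
  have "a \<in> set (a # xs)" by simp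
  hence "poly (\<Prod>b\<leftarrow>a # xs. [:-b, 1:]) a = 0" by (simp only: prod_lin_root)
  hence "poly (\<Prod>b\<leftarrow>ys. [:-b, 1:]) a = 0" by (simp only: Cons.prems)
  hence a: "a \<in> set ys" by (simp only: prod_lin_root)
  hence m: "mset ys = mset (a # remove1 a ys)" by simp
  have "[:-a, 1:] * (\<Prod>b\<leftarrow>xs. [:-b, 1:]) = (\<Prod>b\<leftarrow>a # xs. [:-b, 1:])" by (simp only: list.map prod_list.Cons)
  also have "\<dots> = (\<Prod>b\<leftarrow>ys. [:-b, 1:])" by (rule Cons.prems)
  also have "\<dots> = (\<Prod>b\<leftarrow>a # remove1 a ys. [:-b, 1:])" by (rule prod_lin_perm[OF m])
  also have "\<dots> = [:-a, 1:] * (\<Prod>b\<leftarrow>remove1 a ys. [:-b, 1:])" by (simp only: list.map prod_list.Cons)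
  finally have eq: "[:-a, 1:] * (\<Prod>b\<leftarrow>xs. [:-b, 1:]) = [:-a, 1:] * (\<Prod>b\<leftarrow>remove1 a ys. [:-b, 1:])" .
  have nz: "[:-a, 1:] \<noteq> 0" by simp
  have "(\<Prod>a\<leftarrow>xs. [:-a, 1:]) = (\<Prod>a\<leftarrow>remove1 a ys. [:-a, 1:])" by (rule iffD1[OF mult_left_cancel[OF nz] eq])
  from Cons.IH[OF this] have "mset xs = mset (remove1 a ys)" .
  hence "mset (a # xs) = mset (a # remove1 a ys)" by simp
  thus ?case by (rule trans[OF _ m[symmetric]])
qed

lemma spectral_bound:
  fixes A :: "real mat" and k \<mu> :: real
  assumes A: "A \<in> carrier_mat n n" and n2: "2 \<le> n"
    and sym: "\<And>i j. i < n \<Longrightarrow> j < n \<Longrightarrow> A $$ (i, j) = A $$ (j, i)"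
    and rs: "\<And>i. i < n \<Longrightarrow> (\<Sum>j<n. A $$ (i, j)) = k"
    and QF: "\<And>y. (\<Sum>u<n. y u) = 0 \<Longrightarrow> \<bar>\<Sum>u<n. \<Sum>w<n. A $$ (u, w) * y u * y w\<bar> \<le> \<mu> * (\<Sum>u<n. (y u)^2)"
    and \<mu>k: "\<mu> < k"
  shows "zero_weight_spectral_radius A \<le> \<mu>"
proof -
  have n: "0 < n" using n2 by simp
  define m where "m = n - 1"
  define A3 where "A3 = mat m m (\<lambda>(i,j). A $$ (Suc i, Suc j) - A $$ (Suc i, 0))"
  have A3c: "A3 \<in> carrier_mat m m" by (simp add: A3_def)
  have cpA: "char_poly A = [:-k, 1:] * char_poly A3"
    unfolding A3_def m_def using block_char_poly[OF A n sym] rs by (simp add: atLeast0LessThan)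
  obtain as where fac: "char_poly (map_mat complex_of_real A3) = (\<Prod>a\<leftarrow>as. [:-a, 1:])" and las: "length as = m"
    using char_poly_factorized[of "map_mat complex_of_real A3" m] A3c by auto
  have asr: "Im a = 0 \<and> \<bar>Re a\<bar> \<le> \<mu>" if a: "a \<in> set as" for a
  proof -
    have "poly (char_poly (map_mat complex_of_real A3)) a = 0" unfolding fac using a by (simp add: prod_lin_root)
    thus ?thesis using eig_real_bound[OF A n sym rs QF] unfolding A3_def m_def by blast
  qed
  define \<rho>s where "\<rho>s = map Re as"
  interpret h: map_poly_comm_ring_hom "complex_of_real" ..
  have "map_poly complex_of_real (\<Prod>a\<leftarrow>\<rho>s. [:-a, 1:]) = (\<Prod>a\<leftarrow>\<rho>s. [:- complex_of_real a, 1:])"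
    by (simp add: h.hom_prod_list o_def)
  also have "\<dots> = (\<Prod>a\<leftarrow>as. [:-a, 1:])" unfolding \<rho>s_def
    by (simp add: o_def, intro arg_cong[where f = prod_list] map_cong refl) (use asr complex_eq_iff in auto)
  also have "\<dots> = map_poly complex_of_real (char_poly A3)"
    unfolding fac[symmetric] by (rule of_real_hom.char_poly_hom[OF A3c])
  finally have eqc: "map_poly complex_of_real (\<Prod>a\<leftarrow>\<rho>s. [:-a, 1:]) = map_poly complex_of_real (char_poly A3)" .
  have cp3: "char_poly A3 = (\<Prod>a\<leftarrow>\<rho>s. [:-a, 1:])"
  proof (rule poly_eqI)
    fix i
    have "coeff (map_poly complex_of_real (\<Prod>a\<leftarrow>\<rho>s. [:-a, 1:])) i = coeff (map_poly complex_of_real (char_poly A3)) i"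
      using eqc by simp
    thus "coeff (char_poly A3) i = coeff (\<Prod>a\<leftarrow>\<rho>s. [:-a, 1:]) i" by simp
  qed
  have \<rho>b: "\<bar>r\<bar> \<le> \<mu>" if "r \<in> set \<rho>s" for r using that asr unfolding \<rho>s_def by auto
  have cpA2: "char_poly A = (\<Prod>a\<leftarrow>k # \<rho>s. [:-a, 1:])" using cpA cp3 by simp
  define es0 where "es0 = rev (sort (k # \<rho>s))"
  have ls: "length (k # \<rho>s) = n" using las n by (simp add: \<rho>s_def m_def)
  have dA: "dim_row A = n" using A by simp
  have ev: "eigenvalues_desc A = es0"
    unfolding eigenvalues_desc_def
  proof (rule the_equality)
    have l: "length es0 = dim_row A" using ls dA by (simp add: es0_def)
    have s: "sorted_wrt (\<ge>) es0" unfolding es0_def sorted_wrt_rev by (simp add: sorted_insort)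
    have "mset es0 = mset (k # \<rho>s)" by (simp add: es0_def)
    hence c: "char_poly A = (\<Prod>a\<leftarrow>es0. [:-a, 1:])"
      using cpA2 prod_lin_perm[of es0 "k # \<rho>s" "\<lambda>a. [:-a, 1:]"] by simp
    show "length es0 = dim_row A \<and> sorted_wrt (\<ge>) es0 \<and> char_poly A = (\<Prod>a\<leftarrow>es0. [:-a, 1:])"
      using l s c by blast
  next
    fix es assume es: "length es = dim_row A \<and> sorted_wrt (\<ge>) es \<and> char_poly A = (\<Prod>a\<leftarrow>es. [:-a, 1:])"
    hence "mset es = mset (k # \<rho>s)" using cpA2 prod_lin_mset[of es "k # \<rho>s"] by simp
    hence "mset (rev es) = mset (k # \<rho>s)" by simp
    moreover have "sorted (rev es)" using es by (simp add: sorted_wrt_rev)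
    ultimately have "sort (k # \<rho>s) = rev es" by (rule properties_for_sort)
    thus "es = es0" unfolding es0_def by simp
  qed
  have "sort (k # \<rho>s) = sort \<rho>s @ [k]"
  proof (rule properties_for_sort)
    have "x \<le> k" if "x \<in> set \<rho>s" for x using \<rho>b[OF that] \<mu>k by linarith
    thus "sorted (sort \<rho>s @ [k])" unfolding sorted_append by simp
  qed simp
  hence es0: "es0 = k # rev (sort \<rho>s)" by (simp add: es0_def)
  have b: "\<bar>eigenvalues_desc A ! i\<bar> \<le> \<mu>" if i: "i \<in> {1..<n}" for i
  proof -
    have "es0 ! i = rev (sort \<rho>s) ! (i - 1)" using i es0 by (cases i) auto
    moreover have "i - 1 < length (rev (sort \<rho>s))" using i ls by auto
    ultimately have "es0 ! i \<in> set \<rho>s" by (metis nth_mem set_rev set_sort)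
    thus ?thesis using \<rho>b ev by simp
  qed
  show ?thesis unfolding zero_weight_spectral_radius_def dA
    using b n2 by (subst Max_le_iff) auto
qed



locale sgraph =
  fixes n :: nat and E :: "nat \<Rightarrow> nat \<Rightarrow> bool"
  assumes sg: "simple_graph n E" and conn: "graph_connected n E"
begin

abbreviation d where "d \<equiv> gdist n E"

lemma E_lt: "E u w \<Longrightarrow> u < n \<and> w < n" using sg unfolding simple_graph_def by blast
lemma E_sym: "E u w \<Longrightarrow> E w u" using sg unfolding simple_graph_def by blast
lemma E_irr: "\<not> E u u" using sg unfolding simple_graph_def by blast

lemma walk_ends: "has_walk n E m v w \<Longrightarrow> v < n \<and> w < n"
  unfolding has_walk_def by (metis le0 order_refl)

lemma walk_refl: "v < n \<Longrightarrow> has_walk n E 0 v v"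
  unfolding has_walk_def by (intro exI[of _ "\<lambda>_. v"]) auto

lemma walk_0: "has_walk n E 0 v w \<Longrightarrow> v = w"
  unfolding has_walk_def by auto

lemma walk_snoc: assumes "has_walk n E m v w" "E w u" shows "has_walk n E (Suc m) v u"
proof -
  obtain f where f: "f 0 = v" "f m = w" "\<forall>i\<le>m. f i < n" "\<forall>i<m. E (f i) (f (Suc i))"
    using assms(1) unfolding has_walk_def by blast
  define g where "g i = (if i \<le> m then f i else u)" for i
  have "g 0 = v" "g (Suc m) = u" using f by (auto simp: g_def)
  moreover have "\<forall>i\<le>Suc m. g i < n" using f E_lt[OF assms(2)] by (auto simp: g_def le_Suc_eq)
  moreover have "\<forall>i<Suc m. E (g i) (g (Suc i))" using f assms(2) by (auto simp: g_def less_Suc_eq)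
  ultimately show ?thesis unfolding has_walk_def by blast
qed

lemma walk_rev: assumes "has_walk n E m v w" shows "has_walk n E m w v"
proof -
  obtain f where f: "f 0 = v" "f m = w" "\<forall>i\<le>m. f i < n" "\<forall>i<m. E (f i) (f (Suc i))"
    using assms(1) unfolding has_walk_def by blast
  define g where "g i = f (m - i)" for i
  have "g 0 = w" "g m = v" using f by (auto simp: g_def)
  moreover have "\<forall>i\<le>m. g i < n" using f by (auto simp: g_def)
  moreover have "\<forall>i<m. E (g i) (g (Suc i))"
  proof (intro allI impI)
    fix i assume i: "i < m"
    have "E (f (m - Suc i)) (f (Suc (m - Suc i)))" using f i by auto
    moreover have "Suc (m - Suc i) = m - i" using i by simp
    ultimately show "E (g i) (g (Suc i))" by (simp add: g_def E_sym)
  qed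
  ultimately show ?thesis unfolding has_walk_def by blast
qed

lemma walk_unsnoc: assumes "has_walk n E (Suc m) v w" shows "\<exists>w'. has_walk n E m v w' \<and> E w' w"
proof -
  obtain f where f: "f 0 = v" "f (Suc m) = w" "\<forall>i\<le>Suc m. f i < n" "\<forall>i<Suc m. E (f i) (f (Suc i))"
    using assms(1) unfolding has_walk_def by blast
  have "has_walk n E m v (f m)" unfolding has_walk_def using f by (intro exI[of _ f]) auto
  moreover have "E (f m) w" using f by auto
  ultimately show ?thesis by blast
qed

lemma d_walk: assumes "v < n" "w < n" shows "has_walk n E (d v w) v w"
proof -
  obtain m where "has_walk n E m v w" using conn assms unfolding graph_connected_def by blast
  thus ?thesis unfolding gdist_def by (rule LeastI)
qed

lemma d_le: "has_walk n E m v w \<Longrightarrow> d v w \<le> m"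
  unfolding gdist_def by (rule Least_le)

lemma d_refl[simp]: "v < n \<Longrightarrow> d v v = 0"
  using d_le[OF walk_refl] by simp

lemma d_zero: "v < n \<Longrightarrow> w < n \<Longrightarrow> d v w = 0 \<longleftrightarrow> v = w"
  using d_walk[of v w] walk_0 by auto

lemma d_sym: assumes "v < n" "w < n" shows "d v w = d w v"
  using d_le[OF walk_rev[OF d_walk[OF assms]]] d_le[OF walk_rev[OF d_walk[OF assms(2,1)]]] by simp

lemma d_edge: assumes "v < n" "E w u" shows "d v u \<le> Suc (d v w)"
  using d_le[OF walk_snoc[OF d_walk[OF assms(1)] assms(2)]] E_lt[OF assms(2)] by simp

lemma d_edge': assumes "v < n" "E w u" shows "d v w \<le> Suc (d v u)"
  using d_edge[OF assms(1) E_sym[OF assms(2)]] .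

lemma d_E: assumes "E u w" shows "d u w = 1"
proof -
  have uw: "u < n" "w < n" using E_lt[OF assms] by auto
  have "d u w \<le> 1" using d_edge[OF uw(1) assms] uw by simp
  moreover have "d u w \<noteq> 0" using d_zero[OF uw] E_irr assms by auto
  ultimately show ?thesis by simp
qed

lemma d_1: assumes "u < n" "w < n" shows "d u w = 1 \<longleftrightarrow> E u w"
proof
  assume "d u w = 1"
  hence "has_walk n E (Suc 0) u w" using d_walk[OF assms] by simp
  then obtain w' where "has_walk n E 0 u w'" "E w' w" using walk_unsnoc by blast
  thus "E u w" using walk_0 by blast
qed (rule d_E)

lemma d_pred: assumes "v < n" "w < n" "d v w = Suc m" shows "\<exists>w'. E w' w \<and> d v w' = m"
proof -
  obtain w' where w': "has_walk n E m v w'" "E w' w" using walk_unsnoc d_walk[OF assms(1,2)] assms(3) by metis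
  have "d v w' \<le> m" using d_le[OF w'(1)] .
  moreover have "d v w \<le> Suc (d v w')" using d_edge[OF assms(1) w'(2)] .
  ultimately show ?thesis using w' assms(3) by (intro exI[of _ w']) auto
qed

lemma d_le_diam: assumes "v < n" "w < n" shows "d v w \<le> diameter n E"
proof -
  have "finite {gdist n E v w | v w. v < n \<and> w < n}"
  proof -
    have "{gdist n E v w | v w. v < n \<and> w < n} = (\<lambda>(v,w). d v w) ` ({..<n} \<times> {..<n})" by auto
    thus ?thesis by simp
  qed
  thus ?thesis unfolding diameter_def using assms by (intro Max_ge) auto
qed

end

lemma sum_ind: fixes n :: nat shows "(\<Sum>x<n. if P x then X else 0) = (of_nat (card {x. x < n \<and> P x}) :: 'a :: comm_semiring_1) * X"
proof -
  have "(\<Sum>x<n. if P x then X else 0) = sum (\<lambda>_. X) {x \<in> {..<n}. P x}"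
    by (rule sum.inter_filter[symmetric]) simp
  also have "{x \<in> {..<n}. P x} = {x. x < n \<and> P x}" by auto
  finally show ?thesis by (simp only: sum_constant)
qed

lemma dcount: fixes n :: nat shows "(\<Sum>x<n. card {y. y < n \<and> P x y}) = (\<Sum>y<n. card {x. x < n \<and> P x y})"
proof -
  have "(\<Sum>x<n. card {y. y < n \<and> P x y}) = (\<Sum>x<n. \<Sum>y<n. if P x y then 1 else (0::nat))"
    by (simp add: sum_ind)
  also have "\<dots> = (\<Sum>y<n. \<Sum>x<n. if P x y then 1 else (0::nat))" by (rule sum.swap)
  also have "\<dots> = (\<Sum>y<n. card {x. x < n \<and> P x y})" by (simp add: sum_ind)
  finally show ?thesis .
qed

lemma fiber_sum: fixes n :: nat
  assumes "\<And>x. x < n \<Longrightarrow> Q x \<Longrightarrow> h x \<le> (D::nat)"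
  shows "(\<Sum>x<n. if Q x then g (h x) else 0) = (\<Sum>j\<le>D. of_nat (card {x. x < n \<and> Q x \<and> h x = j}) * (g j :: 'a :: comm_semiring_1))"
proof -
  define S where "S = {x. x < n \<and> Q x}"
  have "(\<Sum>x<n. if Q x then g (h x) else 0) = (\<Sum>x\<in>S. g (h x))"
  proof -
    have "(\<Sum>x<n. if Q x then g (h x) else 0) = sum (\<lambda>x. g (h x)) {x \<in> {..<n}. Q x}"
      by (rule sum.inter_filter[symmetric]) simp
    also have "{x \<in> {..<n}. Q x} = S" by (auto simp: S_def)
    finally show ?thesis .
  qed
  also have "\<dots> = (\<Sum>j\<le>D. \<Sum>x\<in>{x\<in>S. h x = j}. g (h x))"
    by (rule sum.group[symmetric]) (use assms in \<open>auto simp: S_def\<close>)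
  also have "\<dots> = (\<Sum>j\<le>D. of_nat (card {x. x < n \<and> Q x \<and> h x = j}) * g j)"
  proof (intro sum.cong refl)
    fix j
    have e: "{x\<in>S. h x = j} = {x. x < n \<and> Q x \<and> h x = j}" by (auto simp: S_def)
    have "(\<Sum>x\<in>{x\<in>S. h x = j}. g (h x)) = (\<Sum>x\<in>{x\<in>S. h x = j}. g j)" by (intro sum.cong) auto
    thus "(\<Sum>x\<in>{x\<in>S. h x = j}. g (h x)) = of_nat (card {x. x < n \<and> Q x \<and> h x = j}) * g j"
      unfolding e by simp
  qed
  finally show ?thesis .
qed

locale drg = sgraph +
  fixes a b c :: "nat \<Rightarrow> nat"
  assumes drg: "\<And>i v w. i \<le> diameter n E \<Longrightarrow> v < n \<Longrightarrow> w < n \<Longrightarrow> gdist n E v w = i \<Longrightarrow>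
        card {u. u < n \<and> E w u \<and> Suc (gdist n E v u) = i} = c i \<and>
        card {u. u < n \<and> E w u \<and> gdist n E v u = i} = a i \<and>
        card {u. u < n \<and> E w u \<and> gdist n E v u = Suc i} = b i"
begin

abbreviation D where "D \<equiv> diameter n E"

definition F :: "nat \<Rightarrow> nat \<Rightarrow> nat" where
  "F j' j = (if Suc j = j' then c j' else if j = j' then a j' else if j = Suc j' then b j' else 0)"

lemma cnt: assumes v: "v < n" and u: "u < n"
  shows "card {z. z < n \<and> E u z \<and> d v z = j} = F (d v u) j"
proof -
  define i where "i = d v u"
  have iD: "i \<le> D" using d_le_diam[OF v u] i_def by simp
  note dr = drg[OF iD v u i_def[symmetric]]
  show ?thesis
  proof (cases "Suc j = i")
    case True
    hence "{z. z < n \<and> E u z \<and> d v z = j} = {z. z < n \<and> E u z \<and> Suc (d v z) = i}" by auto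
    thus ?thesis using dr True by (simp add: F_def i_def)
  next
    case F1: False
    show ?thesis
    proof (cases "j = i")
      case True
      thus ?thesis using dr F1 by (simp add: F_def i_def)
    next
      case F2: False
      show ?thesis
      proof (cases "j = Suc i")
        case True
        thus ?thesis using dr F1 F2 by (simp add: F_def i_def)
      next
        case F3: False
        have "{z. z < n \<and> E u z \<and> d v z = j} = {}"
        proof -
          { fix z assume z: "E u z" "d v z = j"
            have "d v z \<le> Suc i" using d_edge[OF v z(1)] i_def by simp
            moreover have "i \<le> Suc (d v z)" using d_edge'[OF v z(1)] i_def by simp
            ultimately have False using z(2) F1 F2 F3 by linarith }
          thus ?thesis by auto
        qed
        thus ?thesis using F1 F2 F3 by (simp add: F_def i_def)
      qed
    qed
  qed
qed

definition T :: "nat \<Rightarrow> nat \<Rightarrow> nat \<Rightarrow> nat \<Rightarrow> nat" where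
  "T x y i j = card {u. u < n \<and> d x u = i \<and> d y u = j}"

lemma T_identity: assumes x: "x < n" and y: "y < n"
  shows "(\<Sum>j'\<le>D. T x y i j' * F j' j) = (\<Sum>i'\<le>D. T x y i' j * F i' i)"
proof -
  define P where "P u z = (d x u = i \<and> E u z \<and> d y z = j)" for u z
  have "(\<Sum>u<n. card {z. z < n \<and> P u z}) = (\<Sum>u<n. if d x u = i then F (d y u) j else 0)"
  proof (intro sum.cong refl)
    fix u assume u: "u \<in> {..<n}"
    show "card {z. z < n \<and> P u z} = (if d x u = i then F (d y u) j else 0)"
      using cnt[OF y, of u j] u by (auto simp: P_def)
  qed
  also have "\<dots> = (\<Sum>j'\<le>D. T x y i j' * F j' j)"
    by (subst fiber_sum[where D = D]) (auto simp: d_le_diam y T_def)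
  finally have L: "(\<Sum>u<n. card {z. z < n \<and> P u z}) = (\<Sum>j'\<le>D. T x y i j' * F j' j)" .
  have "(\<Sum>z<n. card {u. u < n \<and> P u z}) = (\<Sum>z<n. if d y z = j then F (d x z) i else 0)"
  proof (intro sum.cong refl)
    fix z assume z: "z \<in> {..<n}"
    have "{u. u < n \<and> P u z} = (if d y z = j then {u. u < n \<and> E z u \<and> d x u = i} else {})"
      by (auto simp: P_def dest: E_sym)
    thus "card {u. u < n \<and> P u z} = (if d y z = j then F (d x z) i else 0)"
      using cnt[OF x, of z i] z by auto
  qed
  also have "\<dots> = (\<Sum>i'\<le>D. card {z. z < n \<and> d y z = j \<and> d x z = i'} * F i' i)"
    by (subst fiber_sum[where D = D]) (auto simp: d_le_diam x)
  also have "\<dots> = (\<Sum>i'\<le>D. T x y i' j * F i' i)"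
    unfolding T_def by (intro sum.cong refl arg_cong2[where f = "(*)"] arg_cong[where f = card]) auto
  finally have R: "(\<Sum>z<n. card {u. u < n \<and> P u z}) = (\<Sum>i'\<le>D. T x y i' j * F i' i)" .
  show ?thesis using L R dcount[of n P] by simp
qed


lemma no_dist: assumes "c (Suc i) = 0" "Suc i \<le> D" "v < n" "w < n" shows "d v w \<noteq> Suc i"
proof
  assume dvw: "d v w = Suc i"
  obtain w' where w': "E w' w" "d v w' = i" using d_pred[OF assms(3,4) dvw] by blast
  have "w' \<in> {u. u < n \<and> E w u \<and> Suc (d v u) = Suc i}" using w' E_sym E_lt by auto
  moreover have "card {u. u < n \<and> E w u \<and> Suc (d v u) = Suc i} = 0"
    using drg[OF assms(2,3,4) dvw] assms(1) by simp
  moreover have "finite {u. u < n \<and> E w u \<and> Suc (d v u) = Suc i}" by simp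
  ultimately show False by auto
qed

lemma T_zero: assumes "x < n" "\<And>u. u < n \<Longrightarrow> d x u \<noteq> i" shows "T x y i j = 0"
  unfolding T_def using assms by auto

lemma T_inv: assumes xy: "x < n" "y < n" "x' < n" "y' < n" and dd: "d x y = d x' y'"
  shows "T x y i j = T x' y' i j"
proof (induction i arbitrary: j rule: less_induct)
  case (less i)
  show ?case
  proof (cases i)
    case 0
    have "T x y 0 j = (if d y x = j then 1 else 0)"
    proof -
      have "{u. u < n \<and> d x u = 0 \<and> d y u = j} = (if d y x = j then {x} else {})"
        using d_zero[OF xy(1)] xy by auto
      thus ?thesis unfolding T_def by simp
    qed
    moreover have "T x' y' 0 j = (if d y' x' = j then 1 else 0)"
    proof -
      have "{u. u < n \<and> d x' u = 0 \<and> d y' u = j} = (if d y' x' = j then {x'} else {})"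
        using d_zero[OF xy(3)] xy by auto
      thus ?thesis unfolding T_def by simp
    qed
    moreover have "d y x = d y' x'" using dd d_sym xy by metis
    ultimately show ?thesis using 0 by simp
  next
    case (Suc i0)
    have IH: "T x y i' j' = T x' y' i' j'" if "i' \<le> i0" for i' j' using less.IH[of i' j'] that Suc by simp
    have L: "(\<Sum>j'\<le>D. T x y i0 j' * F j' j) = (\<Sum>j'\<le>D. T x' y' i0 j' * F j' j)"
      using IH[of i0] by simp
    have G: "T x y i' j * F i' i0 = T x' y' i' j * F i' i0" if "i' \<noteq> Suc i0" for i'
    proof (cases "i' \<le> i0")
      case True thus ?thesis using IH by simp
    next
      case False
      hence "F i' i0 = 0" using that by (auto simp: F_def)
      thus ?thesis by simp
    qed
    show ?thesis
    proof (cases "Suc i0 \<le> D")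
      case True
      have R: "(\<Sum>i'\<le>D. T x y i' j * F i' i0) = (\<Sum>i'\<le>D. T x' y' i' j * F i' i0)"
        using T_identity[OF xy(1,2), of i0 j] T_identity[OF xy(3,4), of i0 j] L by simp
      have sr: "(\<Sum>i'\<le>D. f i') = f (Suc i0) + (\<Sum>i'\<in>{..D} - {Suc i0}. f i')" for f :: "nat \<Rightarrow> nat"
        using True by (subst sum.remove[of _ "Suc i0"]) auto
      have "(\<Sum>i'\<in>{..D} - {Suc i0}. T x y i' j * F i' i0) = (\<Sum>i'\<in>{..D} - {Suc i0}. T x' y' i' j * F i' i0)"
        using G by (intro sum.cong) auto
      hence "T x y (Suc i0) j * F (Suc i0) i0 = T x' y' (Suc i0) j * F (Suc i0) i0"
        using R sr[of "\<lambda>i'. T x y i' j * F i' i0"] sr[of "\<lambda>i'. T x' y' i' j * F i' i0"] by simp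
      hence e: "T x y (Suc i0) j * c (Suc i0) = T x' y' (Suc i0) j * c (Suc i0)" by (simp add: F_def)
      show ?thesis
      proof (cases "c (Suc i0) = 0")
        case False thus ?thesis using e Suc by simp
      next
        case True
        have "T x y (Suc i0) j = 0" by (rule T_zero[OF xy(1)]) (use no_dist[OF True \<open>Suc i0 \<le> D\<close> xy(1)] in auto)
        moreover have "T x' y' (Suc i0) j = 0" by (rule T_zero[OF xy(3)]) (use no_dist[OF True \<open>Suc i0 \<le> D\<close> xy(3)] in auto)
        ultimately show ?thesis using Suc by simp
      qed
    next
      case False
      have "T x y (Suc i0) j = 0" by (rule T_zero[OF xy(1)]) (use d_le_diam xy(1) False in fastforce)
      moreover have "T x' y' (Suc i0) j = 0" by (rule T_zero[OF xy(3)]) (use d_le_diam xy(3) False in fastforce)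
      ultimately show ?thesis using Suc by simp
    qed
  qed
qed

definition K :: "nat \<Rightarrow> nat \<Rightarrow> nat" where "K x i = card {u. u < n \<and> d x u = i}"

lemma K_const: assumes "x < n" "x' < n" shows "K x i = K x' i"
proof -
  have "T x x i i = T x' x' i i" using T_inv[OF assms(1,1,2,2)] assms by simp
  moreover have "T x x i i = K x i" "T x' x' i i = K x' i" unfolding T_def K_def by simp_all
  ultimately show ?thesis by simp
qed

lemma T_edge: assumes "E x y" "E x' y'" shows "T x y i j = T x' y' i j"
  using T_inv E_lt assms d_E by metis


definition Q :: "(nat \<Rightarrow> real) \<Rightarrow> real \<Rightarrow> nat \<Rightarrow> real" where
  "Q y s i = (\<Sum>u<n. \<Sum>w<n. if d u w = i then (y u - s ^ i * y w)^2 else 0)"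

lemma Q_nonneg: "Q y s i \<ge> 0" unfolding Q_def by (intro sum_nonneg) auto

lemma Q_1: "Q y s 1 = (\<Sum>u<n. \<Sum>w<n. if E u w then (y u - s * y w)^2 else 0)"
  unfolding Q_def
proof (intro sum.cong refl)
  fix u w assume "u \<in> {..<n}" "w \<in> {..<n}"
  thus "(if d u w = 1 then (y u - s ^ 1 * y w)\<^sup>2 else 0) = (if E u w then (y u - s * y w)\<^sup>2 else 0)"
    using d_1[of u w] by simp
qed

lemma pw_ineq: fixes p q \<sigma> :: real and i :: nat assumes "\<sigma>^2 = 1"
  shows "real i * (p + \<sigma> * q)^2 \<le> (real i + 1) * p^2 + real i * (real i + 1) * q^2"
proof -
  have "(real i + 1) * p^2 + real i * (real i + 1) * q^2 - real i * (p + \<sigma> * q)^2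
      = (p - real i * \<sigma> * q)^2 + ((real i)^2 + real i) * q^2 * (1 - \<sigma>^2)"
    by (simp add: power2_eq_square algebra_simps)
  also have "\<sigma> * \<sigma> = 1" using assms by (simp add: power2_eq_square)
  hence "(p - real i * \<sigma> * q)^2 + ((real i)^2 + real i) * q^2 * (1 - \<sigma>^2) = (p - real i * \<sigma> * q)^2" by (simp add: power2_eq_square)
  finally show ?thesis by (smt (verit) zero_le_power2)
qed

lemma F_b: "F i (Suc i) = b i" by (simp add: F_def)
lemma F_c: "F (Suc i) i = c (Suc i)" by (simp add: F_def)

lemma step:
  assumes i1: "1 \<le> i" and iD: "Suc i \<le> D" and s2: "s^2 = 1" and e: "E x0 y0"
  shows "real i * c (Suc i) * Q y s (Suc i) \<le> (real i + 1) * b i * Q y s i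
           + real i * (real i + 1) * T x0 y0 i (Suc i) * Q y s 1"
proof -
  define \<tau> where "\<tau> = T x0 y0 i (Suc i)"
  define P where "P u w' w = (d u w' = i \<and> E w' w \<and> d u w = Suc i)" for u w' w
  define TS where "TS X = (\<Sum>u<n. \<Sum>w'<n. \<Sum>w<n. if P u w' w then X u w' w else (0::real))" for X
  define X1 where "X1 u w' = (y u - s^i * y w')^2" for u w'
  define X2 where "X2 u w = (y u - s^(Suc i) * y w)^2" for u w
  define X3 where "X3 w' w = (y w' - s * y w)^2" for w' w
  have iD': "i \<le> D" using iD by simp
  have S1: "TS (\<lambda>u w' w. X1 u w') = b i * Q y s i"
  proof -
    have "TS (\<lambda>u w' w. X1 u w') = (\<Sum>u<n. \<Sum>w'<n. if d u w' = i then b i * X1 u w' else 0)"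
      unfolding TS_def
    proof (intro sum.cong refl)
      fix u w' assume u: "u \<in> {..<n}" and w': "w' \<in> {..<n}"
      show "(\<Sum>w<n. if P u w' w then X1 u w' else 0) = (if d u w' = i then b i * X1 u w' else 0)"
      proof (cases "d u w' = i")
        case True
        have "(\<Sum>w<n. if P u w' w then X1 u w' else 0) = real (card {w. w < n \<and> E w' w \<and> d u w = Suc i}) * X1 u w'"
          using True by (simp add: P_def sum_ind)
        also have "card {w. w < n \<and> E w' w \<and> d u w = Suc i} = b i" using cnt[of u w' "Suc i"] u w' True F_b by simp
        finally show ?thesis using True by simp
      qed (simp add: P_def)
    qed
    also have "\<dots> = b i * Q y s i" unfolding Q_def X1_def sum_distrib_left by (intro sum.cong refl) auto
    finally show ?thesis .
  qed
  have S2: "TS (\<lambda>u w' w. X2 u w) = c (Suc i) * Q y s (Suc i)"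
  proof -
    have "TS (\<lambda>u w' w. X2 u w) = (\<Sum>u<n. \<Sum>w<n. \<Sum>w'<n. if P u w' w then X2 u w else 0)"
      unfolding TS_def by (rule sum.cong[OF refl], rule sum.swap)
    also have "\<dots> = (\<Sum>u<n. \<Sum>w<n. if d u w = Suc i then c (Suc i) * X2 u w else 0)"
    proof (intro sum.cong refl)
      fix u w assume u: "u \<in> {..<n}" and w: "w \<in> {..<n}"
      show "(\<Sum>w'<n. if P u w' w then X2 u w else 0) = (if d u w = Suc i then c (Suc i) * X2 u w else 0)"
      proof (cases "d u w = Suc i")
        case True
        have "(\<Sum>w'<n. if P u w' w then X2 u w else 0) = real (card {w'. w' < n \<and> d u w' = i \<and> E w' w}) * X2 u w"
          using True by (simp add: P_def sum_ind)
        also have "{w'. w' < n \<and> d u w' = i \<and> E w' w} = {w'. w' < n \<and> E w w' \<and> d u w' = i}" by (auto dest: E_sym)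
        also have "card \<dots> = c (Suc i)" using cnt[of u w i] u w True F_c by simp
        finally show ?thesis using True by simp
      qed (simp add: P_def)
    qed
    also have "\<dots> = c (Suc i) * Q y s (Suc i)" unfolding Q_def X2_def sum_distrib_left by (intro sum.cong refl) auto
    finally show ?thesis .
  qed
  have S3: "TS (\<lambda>u w' w. X3 w' w) = \<tau> * Q y s 1"
  proof -
    have "TS (\<lambda>u w' w. X3 w' w) = (\<Sum>w'<n. \<Sum>u<n. \<Sum>w<n. if P u w' w then X3 w' w else 0)"
      unfolding TS_def by (rule sum.swap)
    also have "\<dots> = (\<Sum>w'<n. \<Sum>w<n. \<Sum>u<n. if P u w' w then X3 w' w else 0)"
      by (rule sum.cong[OF refl], rule sum.swap)
    also have "\<dots> = (\<Sum>w'<n. \<Sum>w<n. if E w' w then \<tau> * X3 w' w else 0)"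
    proof (intro sum.cong refl)
      fix w' w assume w': "w' \<in> {..<n}" and w: "w \<in> {..<n}"
      show "(\<Sum>u<n. if P u w' w then X3 w' w else 0) = (if E w' w then \<tau> * X3 w' w else 0)"
      proof (cases "E w' w")
        case True
        have "(\<Sum>u<n. if P u w' w then X3 w' w else 0) = real (card {u. u < n \<and> d u w' = i \<and> d u w = Suc i}) * X3 w' w"
          using True by (simp add: P_def sum_ind)
        also have "{u. u < n \<and> d u w' = i \<and> d u w = Suc i} = {u. u < n \<and> d w' u = i \<and> d w u = Suc i}"
          using d_sym w w' by auto
        also have "card \<dots> = \<tau>" unfolding \<tau>_def T_def[symmetric] by (rule T_edge[OF True e])
        finally show ?thesis using True by simp
      qed (simp add: P_def)
    qed
    also have "\<dots> = \<tau> * Q y s 1" unfolding Q_1 X3_def sum_distrib_left by (intro sum.cong refl) auto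
    finally show ?thesis .
  qed
  have pw: "real i * X2 u w \<le> (real i + 1) * X1 u w' + real i * (real i + 1) * X3 w' w" for u w' w
  proof -
    have "y u - s^(Suc i) * y w = (y u - s^i * y w') + s^i * (y w' - s * y w)" by (simp add: algebra_simps)
    moreover have "(s^i)^2 = 1" using s2 by (metis power_mult_distrib power_one power2_eq_square power_mult)
    ultimately show ?thesis unfolding X1_def X2_def X3_def using pw_ineq by metis
  qed
  have "real i * (c (Suc i) * Q y s (Suc i)) = TS (\<lambda>u w' w. real i * X2 u w)"
    unfolding S2[symmetric] TS_def sum_distrib_left by (intro sum.cong refl) auto
  also have "\<dots> \<le> TS (\<lambda>u w' w. (real i + 1) * X1 u w' + real i * (real i + 1) * X3 w' w)"
    unfolding TS_def by (intro sum_mono) (auto simp: pw)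
  also have "\<dots> = (real i + 1) * TS (\<lambda>u w' w. X1 u w') + real i * (real i + 1) * TS (\<lambda>u w' w. X3 w' w)"
    unfolding TS_def sum_distrib_left sum.distrib[symmetric] by (intro sum.cong refl) auto
  finally show ?thesis unfolding S1 S3 \<tau>_def by (simp add: algebra_simps)
qed


lemma sum_ind_nat: "(\<Sum>x<n. if P x then X else 0) = card {x. x < n \<and> P x} * (X::nat)"
  using sum_ind[where P=P and X=X and n=n] by simp

lemma KB: assumes x: "x < n" and iD: "Suc i \<le> D"
  shows "K x i * b i = K x (Suc i) * c (Suc i)"
proof -
  define P where "P u w = (d x u = i \<and> E u w \<and> d x w = Suc i)" for u w
  have "(\<Sum>u<n. card {w. w < n \<and> P u w}) = (\<Sum>u<n. if d x u = i then b i else 0)"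
  proof (intro sum.cong refl)
    fix u assume u: "u \<in> {..<n}"
    show "card {w. w < n \<and> P u w} = (if d x u = i then b i else 0)"
      using cnt[OF x, of u "Suc i"] u F_b by (auto simp: P_def)
  qed
  also have "\<dots> = K x i * b i" by (simp add: sum_ind_nat K_def)
  finally have L: "(\<Sum>u<n. card {w. w < n \<and> P u w}) = K x i * b i" .
  have "(\<Sum>w<n. card {u. u < n \<and> P u w}) = (\<Sum>w<n. if d x w = Suc i then c (Suc i) else 0)"
  proof (intro sum.cong refl)
    fix w assume w: "w \<in> {..<n}"
    have "{u. u < n \<and> P u w} = (if d x w = Suc i then {u. u < n \<and> E w u \<and> d x u = i} else {})"
      by (auto simp: P_def dest: E_sym)
    thus "card {u. u < n \<and> P u w} = (if d x w = Suc i then c (Suc i) else 0)"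
      using cnt[OF x, of w i] w F_c by auto
  qed
  also have "\<dots> = K x (Suc i) * c (Suc i)" by (simp add: sum_ind_nat K_def)
  finally have R: "(\<Sum>w<n. card {u. u < n \<and> P u w}) = K x (Suc i) * c (Suc i)" .
  show ?thesis using L R dcount[of n P] by simp
qed

lemma Ktau: assumes kreg: "\<And>v. v < n \<Longrightarrow> card {u. u < n \<and> E v u} = k"
  and x: "x < n" and e: "E x y0"
  shows "k * T x y0 i (Suc i) = K x i * b i"
proof -
  define \<tau> where "\<tau> = T x y0 i (Suc i)"
  define P where "P z u = (E x z \<and> d x u = i \<and> d z u = Suc i)" for z u
  have "(\<Sum>z<n. card {u. u < n \<and> P z u}) = (\<Sum>z<n. if E x z then \<tau> else 0)"
  proof (intro sum.cong refl)
    fix z assume z: "z \<in> {..<n}"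
    show "card {u. u < n \<and> P z u} = (if E x z then \<tau> else 0)"
    proof (cases "E x z")
      case True
      have "card {u. u < n \<and> P z u} = T x z i (Suc i)" unfolding T_def P_def using True by simp
      also have "\<dots> = \<tau>" unfolding \<tau>_def by (rule T_edge[OF True e])
      finally show ?thesis using True by simp
    qed (simp add: P_def)
  qed
  also have "\<dots> = k * \<tau>" using kreg[OF x] by (simp add: sum_ind_nat)
  finally have L: "(\<Sum>z<n. card {u. u < n \<and> P z u}) = k * \<tau>" .
  have "(\<Sum>u<n. card {z. z < n \<and> P z u}) = (\<Sum>u<n. if d x u = i then b i else 0)"
  proof (intro sum.cong refl)
    fix u assume u: "u \<in> {..<n}"
    have "{z. z < n \<and> P z u} = (if d x u = i then {z. z < n \<and> E x z \<and> d u z = Suc i} else {})"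
      using u d_sym by (auto simp: P_def)
    moreover have "card {z. z < n \<and> E x z \<and> d u z = Suc i} = b i" if "d x u = i"
      using cnt[of u x "Suc i"] u x that d_sym[OF x, of u] F_b by simp
    ultimately show "card {z. z < n \<and> P z u} = (if d x u = i then b i else 0)" by auto
  qed
  also have "\<dots> = K x i * b i" by (simp add: sum_ind_nat K_def)
  finally have R: "(\<Sum>u<n. card {z. z < n \<and> P z u}) = K x i * b i" .
  show ?thesis using L R dcount[of n P] unfolding \<tau>_def by simp
qed

lemma K1: assumes kreg: "\<And>v. v < n \<Longrightarrow> card {u. u < n \<and> E v u} = k" and x: "x < n"
  shows "K x 1 = k"
proof -
  have "{u. u < n \<and> d x u = 1} = {u. u < n \<and> E x u}" using d_1 x by auto
  thus ?thesis using kreg[OF x] by (simp add: K_def)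
qed

lemma Q_main:
  assumes kreg: "\<And>v. v < n \<Longrightarrow> card {u. u < n \<and> E v u} = k"
    and x0: "x0 < n" and e: "E x0 y0" and s2: "s^2 = 1"
  shows "1 \<le> i \<Longrightarrow> i \<le> D \<Longrightarrow> real k * Q y s i \<le> (real i)^2 * K x0 i * Q y s 1"
proof (induction i)
  case 0 thus ?case by simp
next
  case (Suc i)
  show ?case
  proof (cases "i = 0")
    case True
    thus ?thesis using K1[OF kreg x0] by simp
  next
    case False
    hence i1: "1 \<le> i" by simp
    have iD: "Suc i \<le> D" using Suc.prems by simp
    have IH: "real k * Q y s i \<le> (real i)^2 * K x0 i * Q y s 1" using Suc.IH i1 iD by simp
    have Q1: "Q y s 1 \<ge> 0" by (rule Q_nonneg)
    show ?thesis
    proof (cases "c (Suc i) = 0")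
      case True
      have "Q y s (Suc i) = 0" unfolding Q_def
        by (intro sum.neutral ballI) (use no_dist[OF True iD] in auto)
      thus ?thesis using Q1 by simp
    next
      case False
      define \<tau> where "\<tau> = T x0 y0 i (Suc i)"
      have st: "real i * c (Suc i) * Q y s (Suc i) \<le> (real i + 1) * b i * Q y s i + real i * (real i + 1) * \<tau> * Q y s 1"
        unfolding \<tau>_def by (rule step[OF i1 iD s2 e])
      have kt: "real k * \<tau> = real (K x0 i) * b i" using Ktau[OF kreg x0 e, of i] unfolding \<tau>_def
        by (metis of_nat_mult)
      have kb: "real (K x0 i) * b i = real (K x0 (Suc i)) * c (Suc i)" using KB[OF x0 iD] by (metis of_nat_mult)
      have "real i * c (Suc i) * (real k * Q y s (Suc i)) = real k * (real i * c (Suc i) * Q y s (Suc i))" by (simp add: algebra_simps)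
      also have "\<dots> \<le> real k * ((real i + 1) * b i * Q y s i + real i * (real i + 1) * \<tau> * Q y s 1)"
        by (rule mult_left_mono[OF st]) simp
      also have "\<dots> = (real i + 1) * b i * (real k * Q y s i) + real i * (real i + 1) * (real k * \<tau>) * Q y s 1"
        by (simp add: algebra_simps)
      also have "\<dots> \<le> (real i + 1) * b i * ((real i)^2 * K x0 i * Q y s 1) + real i * (real i + 1) * (real k * \<tau>) * Q y s 1"
        by (intro add_right_mono mult_left_mono[OF IH]) simp
      also have "\<dots> = real i * (real i + 1)^2 * (real (K x0 i) * b i) * Q y s 1"
        unfolding kt by (simp add: algebra_simps power2_eq_square)
      also have "\<dots> = real i * c (Suc i) * ((real (Suc i))^2 * K x0 (Suc i) * Q y s 1)"
        unfolding kb by (simp add: algebra_simps)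
      finally have "real i * c (Suc i) * (real k * Q y s (Suc i)) \<le> real i * c (Suc i) * ((real (Suc i))^2 * K x0 (Suc i) * Q y s 1)" .
      moreover have "real i * c (Suc i) > 0" using i1 False by simp
      ultimately show ?thesis by (simp add: mult_le_cancel_left_pos)
    qed
  qed
qed


lemma card_compl: "card {w. w < n \<and> \<not> P w} = n - card {w. w < n \<and> P w}"
proof -
  have e: "{w. w < n \<and> \<not> P w} = {..<n} - {w. w < n \<and> P w}" by auto
  have "card ({..<n} - {w. w < n \<and> P w}) = card {..<n} - card {w. w < n \<and> P w}"
    by (rule card_Diff_subset) auto
  thus ?thesis using e by simp
qed

lemma QF_drg:
  assumes kreg: "\<And>v. v < n \<Longrightarrow> card {u. u < n \<and> E v u} = k"
    and x0: "x0 < n" and t1: "1 \<le> t" and tD: "t \<le> D" and Kt: "real (K x0 t) \<ge> 3/4 * real n"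
    and ys: "(\<Sum>u<n. y u) = 0" and kpos: "k > 0" and s2: "s^2 = 1"
  shows "s * (\<Sum>u<n. \<Sum>w<n. if E u w then y u * y w else 0) \<le> (1 - 1 / (4 * (real D)^2)) * k * (\<Sum>u<n. (y u)^2)"
proof -
  define N where "N = (\<Sum>u<n. (y u)^2)"
  define QA where "QA = (\<Sum>u<n. \<Sum>w<n. if E u w then y u * y w else 0)"
  define \<eta> where "\<eta> = 1 / (4 * (real D)^2)"
  have N0: "N \<ge> 0" unfolding N_def by (intro sum_nonneg) auto
  obtain y0 where e: "E x0 y0"
  proof -
    have "card {u. u < n \<and> E x0 u} > 0" using kreg[OF x0] kpos by simp
    hence "{u. u < n \<and> E x0 u} \<noteq> {}" by (metis card.empty less_irrefl)
    thus ?thesis using that by blast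
  qed
  have npos: "n > 0" using x0 by simp
  have D1: "D \<ge> 1" using t1 tD by simp
  have A1: "(\<Sum>u<n. \<Sum>w<n. if E u w then (y u)^2 else 0) = k * N"
  proof -
    have "(\<Sum>u<n. \<Sum>w<n. if E u w then (y u)^2 else 0) = (\<Sum>u<n. real k * (y u)^2)"
      using kreg by (intro sum.cong refl) (simp add: sum_ind)
    thus ?thesis by (simp add: N_def sum_distrib_left)
  qed
  have A2: "(\<Sum>u<n. \<Sum>w<n. if E u w then (y w)^2 else 0) = k * N"
  proof -
    have "(\<Sum>u<n. \<Sum>w<n. if E u w then (y w)^2 else 0) = (\<Sum>w<n. \<Sum>u<n. if E u w then (y w)^2 else 0)"
      by (rule sum.swap)
    also have "\<dots> = (\<Sum>w<n. real k * (y w)^2)"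
    proof (intro sum.cong refl)
      fix w assume w: "w \<in> {..<n}"
      have "{u. u < n \<and> E u w} = {u. u < n \<and> E w u}" using E_sym by auto
      thus "(\<Sum>u<n. if E u w then (y w)^2 else 0) = real k * (y w)^2" using kreg w by (simp add: sum_ind)
    qed
    finally show ?thesis by (simp add: N_def sum_distrib_left)
  qed
  have Q1: "Q y s 1 = 2 * k * N - 2 * s * QA"
  proof -
    have "Q y s 1 = (\<Sum>u<n. \<Sum>w<n. (if E u w then (y u)^2 else 0) + (if E u w then (y w)^2 else 0) - 2 * s * (if E u w then y u * y w else 0))"
      unfolding Q_1 using s2 by (intro sum.cong refl) (auto simp: power2_eq_square algebra_simps)
    also have "\<dots> = (\<Sum>u<n. \<Sum>w<n. if E u w then (y u)^2 else 0) + (\<Sum>u<n. \<Sum>w<n. if E u w then (y w)^2 else 0) - 2 * s * QA"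
      unfolding QA_def by (simp only: sum.distrib sum_subtractf sum_distrib_left)
    also have "\<dots> = k * N + k * N - 2 * s * QA" using A1 A2 by simp
    finally show ?thesis by simp
  qed
  define \<sigma> where "\<sigma> = s ^ t"
  have \<sigma>2: "\<sigma> * \<sigma> = 1" using s2 unfolding \<sigma>_def by (metis power2_eq_square power_mult_distrib power_one)
  define f where "f u w = (y u - \<sigma> * y w)^2" for u w
  have Knt: "real (card {w. w < n \<and> d u w \<noteq> t}) = real n - K x0 t" if u: "u < n" for u
  proof -
    have "card {w. w < n \<and> d u w \<noteq> t} = n - K u t" unfolding K_def by (rule card_compl)
    moreover have "K u t \<le> n" unfolding K_def by (rule order.trans[OF card_mono[of "{..<n}"]]) auto
    moreover have "K u t = K x0 t" using K_const[OF u x0] .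
    ultimately show ?thesis by (simp add: of_nat_diff)
  qed
  have Full: "(\<Sum>u<n. \<Sum>w<n. f u w) = 2 * n * N"
  proof -
    have "(\<Sum>u<n. \<Sum>w<n. f u w) = (\<Sum>u<n. \<Sum>w<n. (y u)^2 + (y w)^2 - 2 * \<sigma> * (y u * y w))"
      unfolding f_def using \<sigma>2 by (intro sum.cong refl) (simp add: power2_eq_square algebra_simps)
    also have "\<dots> = n * N + n * N - 2 * \<sigma> * ((\<Sum>u<n. y u) * (\<Sum>w<n. y w))"
      by (simp add: sum.distrib sum_subtractf sum_distrib_left[symmetric] sum_product N_def)
    finally show ?thesis using ys by simp
  qed
  have Rest: "(\<Sum>u<n. \<Sum>w<n. if d u w \<noteq> t then f u w else 0) \<le> 4 * (real n - K x0 t) * N"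
  proof -
    have "(\<Sum>u<n. \<Sum>w<n. if d u w \<noteq> t then f u w else 0)
        \<le> (\<Sum>u<n. \<Sum>w<n. (if d u w \<noteq> t then 2 * (y u)^2 else 0) + (if d u w \<noteq> t then 2 * (y w)^2 else 0))"
    proof (intro sum_mono)
      fix u w
      have "2 * (y u)^2 + 2 * (y w)^2 - f u w = (y u + \<sigma> * y w)^2"
        unfolding f_def using \<sigma>2 by (simp add: power2_eq_square algebra_simps)
      hence "f u w \<le> 2 * (y u)^2 + 2 * (y w)^2" by (smt (verit) zero_le_power2)
      thus "(if d u w \<noteq> t then f u w else 0) \<le> (if d u w \<noteq> t then 2 * (y u)^2 else 0) + (if d u w \<noteq> t then 2 * (y w)^2 else 0)"
        by auto
    qed
    also have "\<dots> = (\<Sum>u<n. \<Sum>w<n. if d u w \<noteq> t then 2 * (y u)^2 else 0) + (\<Sum>u<n. \<Sum>w<n. if d u w \<noteq> t then 2 * (y w)^2 else 0)"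
      by (simp only: sum.distrib)
    also have "(\<Sum>u<n. \<Sum>w<n. if d u w \<noteq> t then 2 * (y w)^2 else 0) = (\<Sum>w<n. \<Sum>u<n. if d u w \<noteq> t then 2 * (y w)^2 else 0)"
      by (rule sum.swap)
    also have "(\<Sum>u<n. \<Sum>w<n. if d u w \<noteq> t then 2 * (y u)^2 else 0) = (\<Sum>u<n. (real n - K x0 t) * (2 * (y u)^2))"
      by (intro sum.cong refl) (simp add: sum_ind Knt)
    also have "(\<Sum>w<n. \<Sum>u<n. if d u w \<noteq> t then 2 * (y w)^2 else 0) = (\<Sum>w<n. (real n - K x0 t) * (2 * (y w)^2))"
    proof (intro sum.cong refl)
      fix w assume w: "w \<in> {..<n}"
      have "{u. u < n \<and> d u w \<noteq> t} = {u. u < n \<and> d w u \<noteq> t}" using d_sym w by auto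
      thus "(\<Sum>u<n. if d u w \<noteq> t then 2 * (y w)^2 else 0) = (real n - K x0 t) * (2 * (y w)^2)"
        using Knt[of w] w by (simp add: sum_ind)
    qed
    finally have R: "(\<Sum>u<n. \<Sum>w<n. if d u w \<noteq> t then f u w else 0) \<le> (\<Sum>u<n. (real n - K x0 t) * (2 * (y u)^2)) + (\<Sum>w<n. (real n - K x0 t) * (2 * (y w)^2))" .
    have e: "(\<Sum>u<n. (real n - K x0 t) * (2 * (y u)^2)) = 2 * (real n - K x0 t) * N"
      unfolding N_def sum_distrib_left by (intro sum.cong refl) (simp add: algebra_simps)
    from R e show ?thesis by linarith
  qed
  have QtF: "Q y s t = (\<Sum>u<n. \<Sum>w<n. f u w) - (\<Sum>u<n. \<Sum>w<n. if d u w \<noteq> t then f u w else 0)"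
    unfolding Q_def f_def \<sigma>_def by (simp add: sum_subtractf[symmetric]) (intro sum.cong refl, auto)
  have Qt: "Q y s t \<ge> n * N"
  proof -
    have "4 * (real n - K x0 t) * N \<le> n * N" using Kt N0 by (intro mult_right_mono) auto
    thus ?thesis using QtF Full Rest by linarith
  qed
  have main: "real k * Q y s t \<le> (real t)^2 * K x0 t * Q y s 1" by (rule Q_main[OF kreg x0 e s2 t1 tD])
  have "K x0 t \<le> n" unfolding K_def by (rule order.trans[OF card_mono[of "{..<n}"]]) auto
  hence Ktn: "real (K x0 t) \<le> n" by simp
  have "(real t)^2 * K x0 t * Q y s 1 \<le> (real D)^2 * n * Q y s 1"
    using tD Ktn Q_nonneg[of y s 1] by (intro mult_right_mono mult_mono power_mono) auto
  hence key: "k * (n * N) \<le> (real D)^2 * n * Q y s 1"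
    using main Qt kpos by (smt (verit) mult_left_mono of_nat_0_le_iff)
  show ?thesis
  proof (rule ccontr)
    assume "\<not> ?thesis"
    hence c: "s * QA > (1 - \<eta>) * k * N" unfolding QA_def N_def \<eta>_def by simp
    hence "Q y s 1 < 2 * \<eta> * k * N" unfolding Q1 by (simp add: algebra_simps)
    moreover have "(real D)^2 * n > 0" using D1 npos by simp
    ultimately have "(real D)^2 * n * Q y s 1 < (real D)^2 * n * (2 * \<eta> * k * N)"
      by (rule mult_strict_left_mono)
    also have "\<dots> = k * (n * N) / 2" unfolding \<eta>_def using D1 by (simp add: field_simps)
    finally have lt: "(real D)^2 * n * Q y s 1 < k * (n * N) / 2" .
    have "k * (n * N) \<ge> 0" using N0 by simp
    thus False using lt key by linarith
  qed
qed

end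

theorem theorem3:
  fixes d :: nat
  assumes "d \<ge> 2"
  shows "\<exists>\<epsilon>::real. \<epsilon> > 0 \<and> (\<exists>\<eta>::real. \<eta> > 0 \<and>
    (\<forall>n E k. distance_regular n E \<and> diameter n E = d \<and> k_regular n E k \<and>
       (\<exists>t \<in> {1..d}. \<exists>v<n. real (k_dist n E v t) \<ge> (1 - \<epsilon>) * real n)
       \<longrightarrow> zero_weight_spectral_radius (adj_matrix n E) \<le> real k * (1 - \<eta>)))"
proof -
  define \<epsilon> :: real where "\<epsilon> = 1/4"
  define \<eta> :: real where "\<eta> = 1 / (4 * (real d)^2)"
  have pos: "\<epsilon> > 0" "\<eta> > 0" using assms by (auto simp: \<epsilon>_def \<eta>_def)
  have main: "\<forall>n E k. distance_regular n E \<and> diameter n E = d \<and> k_regular n E k \<and>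
       (\<exists>t \<in> {1..d}. \<exists>v<n. real (k_dist n E v t) \<ge> (1 - \<epsilon>) * real n)
       \<longrightarrow> zero_weight_spectral_radius (adj_matrix n E) \<le> real k * (1 - \<eta>)"
  proof (intro allI impI)
  fix n E k
  assume H: "distance_regular n E \<and> diameter n E = d \<and> k_regular n E k \<and>
       (\<exists>t \<in> {1..d}. \<exists>v<n. real (k_dist n E v t) \<ge> (1 - \<epsilon>) * real n)"
  have dr: "distance_regular n E" and diam: "diameter n E = d" and kr: "k_regular n E k" using H by auto
  obtain t v0 where t: "t \<in> {1..d}" and v0: "v0 < n" and Kt0: "real (k_dist n E v0 t) \<ge> (1 - 1/4) * real n"
    using H unfolding \<epsilon>_def by blast
  from dr have sg: "simple_graph n E" and npos: "0 < n" and conn: "graph_connected n E"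
    unfolding distance_regular_def by auto
  from dr obtain a b c where abc: "\<forall>i \<le> diameter n E. \<forall>v<n. \<forall>w<n. gdist n E v w = i \<longrightarrow>
        card {u. u < n \<and> E w u \<and> Suc (gdist n E v u) = i} = c i \<and>
        card {u. u < n \<and> E w u \<and> gdist n E v u = i} = a i \<and>
        card {u. u < n \<and> E w u \<and> gdist n E v u = Suc i} = b i"
    unfolding distance_regular_def by blast
  have drg_ax: "\<And>i v w. i \<le> diameter n E \<Longrightarrow> v < n \<Longrightarrow> w < n \<Longrightarrow> gdist n E v w = i \<Longrightarrow>
        card {u. u < n \<and> E w u \<and> Suc (gdist n E v u) = i} = c i \<and>
        card {u. u < n \<and> E w u \<and> gdist n E v u = i} = a i \<and>
        card {u. u < n \<and> E w u \<and> gdist n E v u = Suc i} = b i"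
    using abc by blast
  interpret drg n E a b c
    by (rule drg.intro[OF sgraph.intro[OF sg conn] drg_axioms.intro[OF drg_ax]])
  have kreg: "\<And>v. v < n \<Longrightarrow> card {u. u < n \<and> E v u} = k" using kr unfolding k_regular_def by blast
  have Kt: "real (K v0 t) \<ge> 3/4 * real n" using Kt0 unfolding K_def k_dist_def by simp
  have t1: "1 \<le> t" and tD: "t \<le> D" using t diam by auto
  have "3/4 * real n > 0" using npos by simp
  hence "real (K v0 t) > 0" using Kt by linarith
  hence "K v0 t \<noteq> 0" by simp
  hence "{u. u < n \<and> gdist n E v0 u = t} \<noteq> {}" unfolding K_def by (metis card.empty)
  then obtain w where w: "w < n" "gdist n E v0 w = t" by blast
  obtain m where tm: "t = Suc m" using t1 by (cases t) auto
  obtain w' where w': "E w' w" "gdist n E v0 w' = m" using d_pred[OF v0 w(1)] w(2) tm by blast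
  have kpos: "k > 0"
  proof -
    have "w \<in> {u. u < n \<and> E w' u}" using w' w by simp
    hence ne: "{u. u < n \<and> E w' u} \<noteq> {}" by blast
    have "card {u. u < n \<and> E w' u} > 0" using ne by (subst card_gt_0_iff) simp
    thus ?thesis using kreg[of w'] E_lt[OF w'(1)] by simp
  qed
  have n2: "2 \<le> n"
  proof -
    have "w \<noteq> v0" using w t1 v0 by auto
    thus ?thesis using w v0 by linarith
  qed
  define A where "A = adj_matrix n E"
  have Ac: "A \<in> carrier_mat n n" by (simp add: A_def adj_matrix_def)
  have Aij: "A $$ (i, j) = (if E i j then 1 else 0)" if "i < n" "j < n" for i j
    using that by (simp add: A_def adj_matrix_def)
  have symA: "A $$ (i, j) = A $$ (j, i)" if "i < n" "j < n" for i j
    using that Aij E_sym by auto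
  have rsA: "(\<Sum>j<n. A $$ (i, j)) = real k" if i: "i < n" for i
  proof -
    have "(\<Sum>j<n. A $$ (i, j)) = (\<Sum>j<n. if E i j then 1 else 0)" using Aij i by (intro sum.cong) auto
    also have "\<dots> = real (card {j. j < n \<and> E i j})" by (simp add: sum_ind)
    finally show ?thesis using kreg[OF i] by simp
  qed
  have QF: "\<bar>\<Sum>u<n. \<Sum>w<n. A $$ (u, w) * y u * y w\<bar> \<le> real k * (1 - \<eta>) * (\<Sum>u<n. (y u)^2)"
    if ys: "(\<Sum>u<n. y u) = 0" for y
  proof -
    have eq: "(\<Sum>u<n. \<Sum>w<n. A $$ (u, w) * y u * y w) = (\<Sum>u<n. \<Sum>w<n. if E u w then y u * y w else 0)"
      using Aij by (intro sum.cong refl) auto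
    have p: "1 * (\<Sum>u<n. \<Sum>w<n. if E u w then y u * y w else 0) \<le> (1 - 1 / (4 * (real D)^2)) * k * (\<Sum>u<n. (y u)^2)"
      using QF_drg[OF kreg v0 t1 tD Kt ys kpos, of 1] by simp
    have m: "(-1) * (\<Sum>u<n. \<Sum>w<n. if E u w then y u * y w else 0) \<le> (1 - 1 / (4 * (real D)^2)) * k * (\<Sum>u<n. (y u)^2)"
      using QF_drg[OF kreg v0 t1 tD Kt ys kpos, of "-1"] by simp
    show ?thesis using p m unfolding eq \<eta>_def diam by (simp add: algebra_simps abs_le_iff)
  qed
  have \<mu>k: "real k * (1 - \<eta>) < real k" using kpos assms by (simp add: \<eta>_def)
  show "zero_weight_spectral_radius (adj_matrix n E) \<le> real k * (1 - \<eta>)"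
    using spectral_bound[OF Ac n2 symA rsA QF \<mu>k] unfolding A_def by simp
  qed
  thus ?thesis using pos by blast
qed

end
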